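(* Assume $f\in C^{m+1}[-1,1]$ and $\max_{|x|\le1}|f^{(m+1)}(x)|\le A$ for a constant $A>0$ independent of $m$. For each arbitrary integration node $x_k\in[-1,1]$, let $\int_{-1}^{x_k}f(x)\,dx$ be approximated by the optimal barycentric Gegenbauer quadrature $\sum_{i=0}^m p_{OB,k,i}^{(1)}f(z_{m,k,i}^{(\alpha_k^* )})$. Then, as $m\to\infty$, the optimal barycentric Gegenbauer quadrature converges to the barycentric Chebyshev quadrature, in the sense that for every $k$, $$\sum_{i=0}^m p_{OB,k,i}^{(1)}\,f\big(z_{m,k,i}^{(\alpha_k^* )}\big)-\sum_{i=0}^m p_{B,k,i}^{(1)}\,f\big(x_{m,i}^{(0)}\big)\longrightarrow 0\quad(m\to\infty).$$
   Context: For $\alpha>-1/2$ and integer $n\ge0$, the Gegenbauer polynomial $G_n^{(\alpha)}$ is the Jacobi polynomial $P_n^{(\alpha-1/2,\alpha-1/2)}$ normalized so that $G_n^{(\alpha)}(1)=1$ (for $\alpha=0$ this is the Chebyshev polynomial $T_n$); $K_n^{(\alpha)}$ denotes its leading coefficient. For a node $x_k$, $\eta_{k,m}(\alpha)=\frac{2^m}{K_{m+1}^{(\alpha)}}\int_{-1}^{x_k}G_{m+1}^{(\alpha)}(x)\,dx$, $\alpha_k^*=\operatorname{argmin}_{\alpha>-1/2}\eta_{k,m}^2(\alpha)$, the adjoint GG nodes $z_{m,k,i}^{(\alpha_k^* )}$, $i=0,\dots,m$, are the zeros of $G_{m+1}^{(\alpha_k^* )}$, and $p_{OB,k,i}^{(1)}=\int_{-1}^{x_k}\ell_{k,i}(x)\,dx$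 with $\ell_{k,i}$ the degree-$m$ Lagrange basis polynomial at these nodes. The Chebyshev–Gauss nodes $x_{m,i}^{(0)}$, $i=0,\dots,m$, are the zeros of $T_{m+1}$, and $p_{B,k,i}^{(1)}=\int_{-1}^{x_k}\ell_i^{(0)}(x)\,dx$ with $\ell_i^{(0)}$ the degree-$m$ Lagrange basis polynomial at the Chebyshev–Gauss nodes. *)

theory Defs
  imports "HOL-Analysis.Analysis" "HOL-Computational_Algebra.Polynomial"
begin

definition jacobi_poly :: "real \<Rightarrow> real \<Rightarrow> nat \<Rightarrow> real poly" where
  "jacobi_poly a b n =
     (\<Sum>s\<le>n. smult (((real n + a) gchoose (n - s)) * ((real n + b) gchoose s))
                 ([:-1/2, 1/2:] ^ s * [:1/2, 1/2:] ^ (n - s)))"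

definition gegen :: "real \<Rightarrow> nat \<Rightarrow> real poly" where
  "gegen \<alpha> n = smult (1 / poly (jacobi_poly (\<alpha> - 1/2) (\<alpha> - 1/2) n) 1)
                      (jacobi_poly (\<alpha> - 1/2) (\<alpha> - 1/2) n)"

definition gegen_K :: "real \<Rightarrow> nat \<Rightarrow> real" where
  "gegen_K \<alpha> n = lead_coeff (gegen \<alpha> n)"

definition eta :: "real \<Rightarrow> nat \<Rightarrow> real \<Rightarrow> real" where
  "eta xk m \<alpha> = 2 ^ m / gegen_K \<alpha> (Suc m) * integral {-1..xk} (\<lambda>x. poly (gegen \<alpha> (Suc m)) x)"

definition gg_nodes :: "real \<Rightarrow> nat \<Rightarrow> real set" where
  "gg_nodes \<alpha> m = {x. poly (gegen \<alpha> (Suc m)) x = 0}"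

definition lagrange_basis :: "real set \<Rightarrow> real \<Rightarrow> real poly" where
  "lagrange_basis Z z = (\<Prod>w\<in>Z - {z}. smult (1 / (z - w)) [:-w, 1:])"

definition quad_weight :: "real set \<Rightarrow> real \<Rightarrow> real \<Rightarrow> real" where
  "quad_weight Z xk z = integral {-1..xk} (\<lambda>x. poly (lagrange_basis Z z) x)"

definition quad :: "real set \<Rightarrow> real \<Rightarrow> (real \<Rightarrow> real) \<Rightarrow> real" where
  "quad Z xk f = (\<Sum>z\<in>Z. quad_weight Z xk z * f z)"

end

theory Submission
  imports Defs
begin


lemma rolle_multi:
  fixes g g' :: "real \<Rightarrow> real"
  assumes cont: "continuous_on {a..b} g"
    and der: "\<And>x. a < x \<Longrightarrow> x < b \<Longrightarrow> (g has_real_derivative g' x) (at x)"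
  shows "finite T \<Longrightarrow> T \<subseteq> {a..b} \<Longrightarrow> card T = Suc m \<Longrightarrow> (\<forall>t\<in>T. g t = 0) \<Longrightarrow>
    \<exists>S. finite S \<and> S \<subseteq> {Min T<..<Max T} \<and> card S = m \<and> (\<forall>s\<in>S. g' s = 0)"
proof (induction m arbitrary: T)
  case 0
  then show ?case by (intro exI[of _ "{}"]) auto
next
  case (Suc m)
  define t where "t = Max T"
  define T' where "T' = T - {t}"
  have Tne: "T \<noteq> {}" using Suc.prems by auto
  have tT: "t \<in> T" using Suc.prems Tne unfolding t_def by auto
  have cT': "card T' = Suc m" using Suc.prems tT unfolding T'_def by auto
  have fT': "finite T'" using Suc.prems unfolding T'_def by auto
  have T'ne: "T' \<noteq> {}" using cT' by auto
  obtain S' where S': "finite S'" "S' \<subseteq> {Min T'<..<Max T'}" "card S' = m" "\<forall>s\<in>S'. g' s = 0"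
    using Suc.IH[OF fT' _ cT'] Suc.prems unfolding T'_def by auto
  define u where "u = Max T'"
  have uT': "u \<in> T'" using fT' T'ne unfolding u_def by auto
  have ut: "u < t"
    using uT' Suc.prems unfolding T'_def t_def
    by (metis DiffE Max_ge insertI1 order_le_less)
  have uab: "a \<le> u" "t \<le> b" using uT' tT Suc.prems unfolding T'_def by auto
  obtain z where z: "u < z" "z < t" "(\<lambda>v. g' z * v) = (\<lambda>v. 0)"
  proof -
    have "\<exists>z. u < z \<and> z < t \<and> (\<lambda>v. g' z * v) = (\<lambda>v. 0)"
    proof (rule Rolle_deriv[OF ut])
      show "g u = g t" using uT' tT Suc.prems unfolding T'_def by auto
      show "continuous_on {u..t} g" using uab by (intro continuous_on_subset[OF cont]) auto
      fix x assume "u < x" "x < t"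
      then show "(g has_derivative (\<lambda>v. g' x * v)) (at x)"
        using der[of x] uab by (simp add: has_field_derivative_def)
    qed
    then show ?thesis using that by blast
  qed
  have gz: "g' z = 0" using z(3) by (metis mult_cancel_left1 zero_neq_one)
  have MinT: "Min T \<le> Min T'" using fT' T'ne Suc.prems unfolding T'_def by (intro Min_antimono) auto
  have zS': "z \<notin> S'" using S'(2) z(1) unfolding u_def by auto
  show ?case
  proof (intro exI[of _ "insert z S'"] conjI)
    show "finite (insert z S')" using S' by auto
    show "card (insert z S') = Suc m" using S' zS' by auto
    show "\<forall>s\<in>insert z S'. g' s = 0" using S' gz by auto
    have "Min T' \<le> u" using fT' T'ne unfolding u_def by auto
    then show "insert z S' \<subseteq> {Min T<..<Max T}"
      using S'(2) z MinT unfolding u_def t_def by (auto simp: subset_eq)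
  qed
qed

lemma rolle_iter:
  fixes g :: "nat \<Rightarrow> real \<Rightarrow> real"
  assumes cont: "\<And>j. j < n \<Longrightarrow> continuous_on {a..b} (g j)"
    and der: "\<And>j x. j < n \<Longrightarrow> a < x \<Longrightarrow> x < b \<Longrightarrow> (g j has_real_derivative g (Suc j) x) (at x)"
    and T: "finite T" "T \<subseteq> {a..b}" "card T = Suc n" "\<forall>t\<in>T. g 0 t = 0"
  shows "\<exists>\<xi>\<in>{a..b}. g n \<xi> = 0"
proof -
  have "j \<le> n \<Longrightarrow> \<exists>T'. finite T' \<and> T' \<subseteq> {a..b} \<and> card T' = Suc n - j \<and> (\<forall>t\<in>T'. g j t = 0)" for j
  proof (induction j)
    case 0
    then show ?case using T by auto
  next
    case (Suc j)
    then obtain T' where T': "finite T'" "T' \<subseteq> {a..b}" "card T' = Suc (n - j)" "\<forall>t\<in>T'. g j t = 0"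
      by (metis Suc_diff_le Suc_leD)
    have ne: "T' \<noteq> {}" using T'(3) by auto
    obtain S where S: "finite S" "S \<subseteq> {Min T'<..<Max T'}" "card S = n - j" "\<forall>s\<in>S. g (Suc j) s = 0"
      using rolle_multi[of a b "g j" "g (Suc j)", OF cont der T'(1,2,3,4)] Suc.prems by auto
    have "{Min T'<..<Max T'} \<subseteq> {a..b}"
    proof
      fix y assume y: "y \<in> {Min T'<..<Max T'}"
      have "Min T' \<in> {a..b}" "Max T' \<in> {a..b}" using T'(1,2) ne Min_in Max_in by blast+
      then show "y \<in> {a..b}" using y by auto
    qed
    then show ?case using S Suc.prems by (intro exI[of _ S]) auto
  qed
  from this[of n] obtain T' where "finite T'" "T' \<subseteq> {a..b}" "card T' = 1" "\<forall>t\<in>T'. g n t = 0" by auto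
  then show ?thesis by (metis card_1_singletonE insert_subset singletonI)
qed

lemma leibniz_deriv:
  fixes F G :: "nat \<Rightarrow> real \<Rightarrow> real"
  assumes dF: "\<And>j. (F j has_real_derivative F (Suc j) x) (at x)"
    and dG: "\<And>j. (G j has_real_derivative G (Suc j) x) (at x)"
  shows "((\<lambda>y. \<Sum>s\<le>k. real (k choose s) * F s y * G (k-s) y) has_real_derivative
           (\<Sum>s\<le>Suc k. real (Suc k choose s) * F s x * G (Suc k - s) x)) (at x)"
proof -
  have d: "((\<lambda>y. \<Sum>s\<le>k. real (k choose s) * F s y * G (k-s) y) has_real_derivative
      (\<Sum>s\<le>k. real (k choose s) * (F (Suc s) x * G (k-s) x + F s x * G (Suc (k-s)) x))) (at x)"
  proof (intro DERIV_sum)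
    fix s
    show "((\<lambda>y. real (k choose s) * F s y * G (k-s) y) has_real_derivative
      real (k choose s) * (F (Suc s) x * G (k-s) x + F s x * G (Suc (k-s)) x)) (at x)"
      using DERIV_cmult[OF DERIV_mult'[OF dF[of s] dG[of "k-s"]], of "real (k choose s)"]
      by (simp add: mult.assoc add.commute)
  qed
  have e1: "(\<Sum>s\<le>Suc k. real (Suc k choose s) * F s x * G (Suc k - s) x)
     = F 0 x * G (Suc k) x + (\<Sum>s\<le>k. real (k choose s) * F (Suc s) x * G (k - s) x)
        + (\<Sum>s\<le>k. real (k choose Suc s) * F (Suc s) x * G (k - s) x)"
    by (subst sum.atMost_Suc_shift) (simp add: sum.distrib algebra_simps)
  have e2: "(\<Sum>s\<le>k. real (k choose s) * F s x * G (Suc (k - s)) x)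
     = F 0 x * G (Suc k) x + (\<Sum>s<k. real (k choose Suc s) * F (Suc s) x * G (Suc (k - Suc s)) x)"
  proof (cases k)
    case 0 then show ?thesis by simp
  next
    case (Suc k')
    then show ?thesis by (simp only: atMost_Suc_eq_insert_0 lessThan_Suc_atMost) (simp add: sum.reindex)
  qed
  have e3: "(\<Sum>s\<le>k. real (k choose Suc s) * F (Suc s) x * G (k - s) x)
      = (\<Sum>s<k. real (k choose Suc s) * F (Suc s) x * G (Suc (k - Suc s)) x)"
    by (simp add: lessThan_Suc_atMost[symmetric] Suc_diff_Suc)
  show ?thesis using d e1 e2 e3 by (simp add: algebra_simps sum.distrib)
qed

lemma fact_gchoose_Suc: "fact (Suc s) * (N gchoose Suc s) = fact s * (N gchoose s) * (N - real s)"
  by (simp only: gbinomial_mult_fact prod.atLeast0_lessThan_Suc)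

lemma gchoose_Suc_eq: "(N gchoose Suc s) = (N gchoose s) * (N - real s) / (1 + real s)"
proof -
  have "(1 + real s) * fact s * (N gchoose Suc s) = fact s * (N gchoose s) * (N - real s)"
    using fact_gchoose_Suc[of s N] by (simp add: algebra_simps)
  then have "(1 + real s) * (N gchoose Suc s) = (N gchoose s) * (N - real s)"
    by (metis (no_types, lifting) fact_nonzero mult.commute mult.left_commute mult_cancel_left)
  then show ?thesis by (simp add: field_simps add_pos_nonneg)
qed

definition FF :: "real \<Rightarrow> nat \<Rightarrow> real \<Rightarrow> real" where
  "FF N s y = fact s * (N gchoose s) * (1+y) powr (N - real s)"
definition GG :: "real \<Rightarrow> nat \<Rightarrow> real \<Rightarrow> real" where
  "GG N j y = (-1)^j * (fact j * (N gchoose j)) * (1-y) powr (N - real j)"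
definition WW :: "real \<Rightarrow> nat \<Rightarrow> real \<Rightarrow> real" where
  "WW N k y = (\<Sum>s\<le>k. real (k choose s) * FF N s y * GG N (k-s) y)"

lemma FF_deriv: "-1 < x \<Longrightarrow> (FF N s has_real_derivative FF N (Suc s) x) (at x)"
  unfolding FF_def
  apply (rule derivative_eq_intros refl | simp)+
  apply (simp add: gchoose_Suc_eq field_simps)
  done

lemma GG_deriv: "x < 1 \<Longrightarrow> (GG N s has_real_derivative GG N (Suc s) x) (at x)"
  unfolding GG_def
  apply (rule derivative_eq_intros refl | simp)+
  apply (simp add: gchoose_Suc_eq field_simps)
  done

lemma WW_deriv: "-1 < x \<Longrightarrow> x < 1 \<Longrightarrow> (WW N k has_real_derivative WW N (Suc k) x) (at x)"
  unfolding WW_def[abs_def] using leibniz_deriv[of "FF N" x "GG N" k] FF_deriv GG_deriv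
  by (simp add: WW_def)

lemma WW_cont:
  assumes "k < n" "a > -1"
  shows "continuous_on {-1..1} (WW (real n + a) k)"
proof -
  have "continuous_on {-1..1} (\<lambda>y. real (k choose s) * FF (real n + a) s y * GG (real n + a) (k-s) y)"
    if "s \<le> k" for s
  proof -
    have p1: "real n + a - real s > 0" "real n + a - real (k - s) > 0" using assms that by auto
    have c1: "continuous_on {-1..1} (\<lambda>y. (1+y) powr (real n + a - real s))"
      by (intro continuous_on_powr') (use p1 in \<open>auto intro!: continuous_intros\<close>)
    have c2: "continuous_on {-1..1} (\<lambda>y. (1-y) powr (real n + a - real (k-s)))"
      by (intro continuous_on_powr') (use p1 in \<open>auto intro!: continuous_intros\<close>)
    show ?thesis unfolding FF_def GG_def
      by (intro continuous_on_mult continuous_on_const c1 c2)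
  qed
  then show ?thesis unfolding WW_def[abs_def] by (intro continuous_on_sum) auto
qed

lemma WW_ends:
  assumes "k < n" "a > -1"
  shows "WW (real n + a) k (-1) = 0" "WW (real n + a) k 1 = 0"
proof -
  have "FF (real n + a) s (-1) = 0" if "s \<le> k" for s
    unfolding FF_def by simp
  then show "WW (real n + a) k (-1) = 0" unfolding WW_def by (intro sum.neutral) auto
  have "GG (real n + a) s 1 = 0" if "s \<le> k" for s
    unfolding GG_def by simp
  then show "WW (real n + a) k 1 = 0" unfolding WW_def by (intro sum.neutral) auto
qed

lemma WW_zeros:
  assumes "a > -1" "k \<le> n"
  shows "\<exists>S. finite S \<and> S \<subseteq> {-1<..<1} \<and> card S = k \<and> (\<forall>s\<in>S. WW (real n + a) k s = 0)"
  using assms(2)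
proof (induction k)
  case 0
  then show ?case by (intro exI[of _ "{}"]) auto
next
  case (Suc k)
  then obtain S where S: "finite S" "S \<subseteq> {-1<..<1}" "card S = k" "\<forall>s\<in>S. WW (real n + a) k s = 0"
    by auto
  define T where "T = insert (-1) (insert 1 S)"
  have n1: "-1 \<notin> S" "1 \<notin> S" using S(2) by auto
  have T: "finite T" "T \<subseteq> {-1..1}" "card T = Suc (Suc k)" "\<forall>t\<in>T. WW (real n + a) k t = 0"
    using S WW_ends[of k n a] Suc.prems assms unfolding T_def by (auto simp: subset_eq card_insert_if n1)
  obtain S' where S': "finite S'" "S' \<subseteq> {Min T<..<Max T}" "card S' = Suc k"
      "\<forall>s\<in>S'. WW (real n + a) (Suc k) s = 0"
    using rolle_multi[OF WW_cont[of k n a] WW_deriv T] Suc.prems assms by auto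
  have Tne: "T \<noteq> {}" unfolding T_def by auto
  have "Min T \<in> T" "Max T \<in> T" using Min_in[OF T(1) Tne] Max_in[OF T(1) Tne] by auto
  then have "Min T \<ge> -1" "Max T \<le> 1" using T(2) by auto
  then have "S' \<subseteq> {-1<..<1}" using S'(2) by auto
  then show ?case using S' by blast
qed



lemma neg1_pow_diff: "s \<le> n \<Longrightarrow> (-1::real)^(n-s) = (-1)^n * (-1)^s"
proof -
  assume "s \<le> n"
  then have "(-1::real)^n = (-1)^(n-s) * (-1)^s" by (simp add: power_add[symmetric])
  then have "(-1::real)^n * (-1)^s = (-1)^(n-s) * ((-1)^s * (-1)^s)" by simp
  also have "(-1::real)^s * (-1)^s = 1" by (simp add: power_add[symmetric] flip: power_mult_distrib)
  finally show ?thesis by simp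
qed

lemma alg6:
  fixes c fs fns fn t1 t2 tn Cs Cns pa qa up uq sn e :: real
  assumes "c*fs*fns = fn" "t1*t2 = tn" "t1 \<noteq> 0" "t2 \<noteq> 0"
  shows "c * (fs*Cs*(pa*up)) * ((sn*e)*(fns*Cns)*(qa*uq)) = (sn*tn)*fn*(pa*qa)*(Cns*Cs*((e*uq/t1)*(up/t2)))"
proof -
  have tn: "tn \<noteq> 0" using assms by auto
  have "(sn*tn)*fn*(pa*qa)*(Cns*Cs*((e*uq/t1)*(up/t2))) = (sn*fn*pa*qa*Cns*Cs*e*uq*up) * (tn / (t1*t2))"
    by (simp add: mult_ac)
  also have "tn / (t1*t2) = 1" using assms tn by simp
  finally show ?thesis using assms(1) by (simp add: mult_ac)
qed

lemma WW_term:
  assumes x: "-1 < x" "x < 1" and s: "s \<le> n"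
  shows "real (n choose s) * FF (real n + a) s x * GG (real n + a) (n-s) x =
     (-2)^n * fact n * ((1+x) powr a * (1-x) powr a) *
      (((real n + a) gchoose (n - s)) * ((real n + a) gchoose s) * (poly [:-1/2, 1/2:] x ^ s * poly [:1/2, 1/2:] x ^ (n - s)))"
proof -
  define N where "N = real n + a"
  have e1: "N - real s = a + real (n-s)" using s by (simp add: N_def of_nat_diff)
  have p1: "(1+x) powr (N - real s) = (1+x) powr a * (1+x)^(n-s)"
    unfolding e1 powr_add using x by (simp add: powr_realpow)
  have e2: "N - real (n-s) = a + real s" using s by (simp add: N_def of_nat_diff)
  have p2: "(1-x) powr (N - real (n-s)) = (1-x) powr a * (1-x)^s"
    unfolding e2 powr_add using x by (simp add: powr_realpow)
  have f: "real (n choose s) * fact s * fact (n-s) = fact n"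
  proof -
    have "real (fact s * fact (n-s) * (n choose s)) = real (fact n)" using binomial_fact_lemma[OF s] by simp
    then show ?thesis by (simp only: of_nat_mult of_nat_fact mult_ac)
  qed
  have h1: "poly [:-1/2, 1/2:] x ^ s = (-1)^s * (1-x)^s / 2^s"
  proof -
    have "poly [:-1/2, 1/2:] x = ((-1) * (1-x)) / 2" by simp
    then show ?thesis by (simp only: power_divide power_mult_distrib)
  qed
  have h2: "poly [:1/2, 1/2:] x ^ (n-s) = (1+x)^(n-s) / 2^(n-s)"
  proof -
    have "poly [:1/2, 1/2:] x = (1+x) / 2" by simp
    then show ?thesis by (simp only: power_divide)
  qed
  have h3: "(2::real)^s * 2^(n-s) = 2^n" using s by (simp add: power_add[symmetric])
  have h4: "(-2::real)^n = (-1)^n * 2^n" by (simp add: power_mult_distrib[symmetric])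
  show ?thesis
    unfolding FF_def GG_def N_def[symmetric] p1 p2 h1 h2 neg1_pow_diff[OF s] h4
    by (rule alg6[OF f h3]) simp_all
qed

lemma WW_jacobi:
  assumes x: "-1 < x" "x < 1"
  shows "WW (real n + a) n x = (-2)^n * fact n * ((1+x) powr a * (1-x) powr a) * poly (jacobi_poly a a n) x"
  unfolding WW_def jacobi_poly_def poly_sum poly_smult poly_mult poly_power sum_distrib_left
  by (rule sum.cong[OF refl]) (use WW_term[OF x] in simp)

lemma jacobi_zeros:
  assumes a: "a > -1"
  shows "\<exists>S. finite S \<and> S \<subseteq> {-1<..<1} \<and> card S = n \<and> (\<forall>s\<in>S. poly (jacobi_poly a a n) s = 0)"
proof -
  obtain S where S: "finite S" "S \<subseteq> {-1<..<1}" "card S = n" "\<forall>s\<in>S. WW (real n + a) n s = 0"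
    using WW_zeros[OF a, of n n] by auto
  have "poly (jacobi_poly a a n) s = 0" if "s \<in> S" for s
  proof -
    have x: "-1 < s" "s < 1" using that S(2) by auto
    have "(-2::real)^n * fact n * ((1+s) powr a * (1-s) powr a) \<noteq> 0" using x by simp
    then show ?thesis using S(4) that WW_jacobi[OF x, of n a] by simp
  qed
  then show ?thesis using S by blast
qed

lemma jacobi_at_1: "poly (jacobi_poly a b n) 1 = (real n + a) gchoose n"
proof -
  have "poly (jacobi_poly a b n) 1 = (\<Sum>s\<le>n. if s = 0 then (real n + a) gchoose n else 0)"
    unfolding jacobi_poly_def poly_sum poly_smult poly_mult poly_power
    by (rule sum.cong[OF refl]) auto
  then show ?thesis by simp
qed

lemma jacobi_at_1_pos: "a > -1 \<Longrightarrow> poly (jacobi_poly a b n) 1 > 0"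
  unfolding jacobi_at_1 gbinomial_pochhammer'
  by (intro divide_pos_pos pochhammer_pos) auto

lemma degree_jacobi: "degree (jacobi_poly a b n) \<le> n"
  unfolding jacobi_poly_def
proof (intro degree_sum_le)
  fix s assume "s \<in> {..n}"
  have "degree ([:-1/2, 1/2:] ^ s * [:1/2, 1/2:] ^ (n - s) :: real poly) \<le> s + (n - s)"
    by (intro order.trans[OF degree_mult_le] add_mono order.trans[OF degree_power_le]) auto
  then show "degree (smult (((real n + a) gchoose (n - s)) * ((real n + b) gchoose s))
                 ([:-1/2, 1/2:] ^ s * [:1/2, 1/2:] ^ (n - s))) \<le> n"
    using \<open>s \<in> {..n}\<close> by (intro order.trans[OF degree_smult_le]) auto
qed auto

lemma gg_nodes_props:
  assumes "\<alpha> > -1/2"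
  shows "finite (gg_nodes \<alpha> m) \<and> gg_nodes \<alpha> m \<subseteq> {-1<..<1} \<and> card (gg_nodes \<alpha> m) = Suc m"
proof -
  define a where "a = \<alpha> - 1/2"
  have a: "a > -1" using assms unfolding a_def by simp
  define J where "J = jacobi_poly a a (Suc m)"
  have c: "poly J 1 > 0" unfolding J_def using jacobi_at_1_pos[OF a] by blast
  have eq: "gg_nodes \<alpha> m = {x. poly J x = 0}"
    unfolding gg_nodes_def gegen_def J_def a_def using c by (simp add: J_def a_def)
  have J0: "J \<noteq> 0" using c by auto
  have fin: "finite {x. poly J x = 0}" using poly_roots_finite[OF J0] .
  have cb: "card {x. poly J x = 0} \<le> Suc m"
    using card_poly_roots_bound[OF J0] degree_jacobi[of a a "Suc m"] unfolding J_def by linarith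
  obtain S where S: "finite S" "S \<subseteq> {-1<..<1}" "card S = Suc m" "\<forall>s\<in>S. poly J s = 0"
    using jacobi_zeros[OF a, of "Suc m"] unfolding J_def by blast
  have sub: "S \<subseteq> {x. poly J x = 0}" using S(4) by auto
  have SJ: "S = {x. poly J x = 0}"
    using card_subset_eq[OF fin sub] S(3) cb card_mono[OF fin sub] by linarith
  have "gg_nodes \<alpha> m = S" unfolding eq SJ ..
  then show ?thesis using S(1-3) by simp
qed



lemma lagrange_at:
  assumes "finite Z" "z \<in> Z" "w \<in> Z"
  shows "poly (lagrange_basis Z z) w = (if w = z then 1 else 0)"
proof (cases "w = z")
  case True
  have "poly (lagrange_basis Z z) w = (\<Prod>v\<in>Z - {z}. 1)"
    unfolding lagrange_basis_def poly_prod using True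
  proof (intro prod.cong refl)
    fix v assume "v \<in> Z - {z}"
    then have "z - v \<noteq> 0" by auto
    have "poly (smult (1 / (z - v)) [:- v, 1:]) w = (1 / (z - v)) * (z - v)" using True by (simp add: diff_divide_distrib[symmetric])
    then show "poly (smult (1 / (z - v)) [:- v, 1:]) w = 1" using \<open>z - v \<noteq> 0\<close> by simp
  qed
  then show ?thesis using True by simp
next
  case False
  have "w \<in> Z - {z}" using False assms by auto
  then have "poly (lagrange_basis Z z) w = 0"
    unfolding lagrange_basis_def poly_prod using assms(1) by (intro prod_zero) (auto intro!: bexI[of _ w])
  then show ?thesis using False by simp
qed

lemma degree_lagrange:
  assumes "finite Z" "z \<in> Z"
  shows "degree (lagrange_basis Z z) \<le> card Z - 1"
proof -
  have "degree (lagrange_basis Z z) \<le> (\<Sum>v\<in>Z - {z}. (degree \<circ> (\<lambda>v. smult (1 / (z - v)) [:-v, 1:])) v)"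
    unfolding lagrange_basis_def by (rule degree_prod_sum_le) (use assms in simp)
  also have "\<dots> \<le> (\<Sum>v\<in>Z - {z}. 1)"
    unfolding o_def by (intro sum_mono order.trans[OF degree_smult_le]) simp
  also have "\<dots> = card Z - 1" using assms by simp
  finally show ?thesis .
qed

lemma pderiv_iter_zero: "degree p < j \<Longrightarrow> (pderiv ^^ j) (p :: real poly) = 0"
proof (induction j arbitrary: p)
  case 0 then show ?case by simp
next
  case (Suc j)
  show ?case
  proof (cases "j = 0")
    case True
    then have "degree p = 0" using Suc.prems by simp
    then show ?thesis using True by (simp add: pderiv_eq_0_iff)
  next
    case False
    have "degree (pderiv p) < j" using Suc.prems False by (simp add: degree_pderiv)
    then show ?thesis using Suc.IH by (simp add: funpow_Suc_right del: funpow.simps)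
  qed
qed

lemma pderiv_iter_top: "degree p = j \<Longrightarrow> (pderiv ^^ j) (p :: real poly) = [:fact j * lead_coeff p:]"
proof (induction j arbitrary: p)
  case 0
  then show ?case by (metis degree_0_id fact_0 mult_1 funpow_0)
next
  case (Suc j)
  have d: "degree (pderiv p) = j" using Suc.prems by (simp add: degree_pderiv)
  have l: "lead_coeff (pderiv p) = real (Suc j) * lead_coeff p"
    using d Suc.prems by (simp add: coeff_pderiv)
  show ?case using Suc.IH[OF d] l by (simp add: funpow_Suc_right del: funpow.simps)
qed

definition omega :: "real set \<Rightarrow> real poly" where
  "omega Z = (\<Prod>z\<in>Z. [:-z, 1:])"

lemma omega_props:
  assumes "finite Z"
  shows "degree (omega Z) = card Z" "lead_coeff (omega Z) = 1"
    "\<And>x. poly (omega Z) x = (\<Prod>z\<in>Z. x - z)"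
proof -
  show "degree (omega Z) = card Z" unfolding omega_def
    by (subst degree_prod_sum_eq) auto
  show "lead_coeff (omega Z) = 1" unfolding omega_def lead_coeff_prod by simp
  show "\<And>x. poly (omega Z) x = (\<Prod>z\<in>Z. x - z)" unfolding omega_def poly_prod by simp
qed

definition interp :: "real set \<Rightarrow> (real \<Rightarrow> real) \<Rightarrow> real poly" where
  "interp Z f = (\<Sum>z\<in>Z. smult (f z) (lagrange_basis Z z))"

lemma interp_at: "finite Z \<Longrightarrow> w \<in> Z \<Longrightarrow> poly (interp Z f) w = f w"
  unfolding interp_def poly_sum poly_smult
  by (simp add: lagrange_at if_distrib cong: if_cong)

lemma degree_interp: "finite Z \<Longrightarrow> degree (interp Z f) \<le> card Z - 1"
  unfolding interp_def
  by (intro degree_sum_le order.trans[OF degree_smult_le] degree_lagrange) auto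

lemma interp_error:
  fixes f :: "real \<Rightarrow> real" and Df :: "nat \<Rightarrow> real \<Rightarrow> real"
  assumes Df0: "Df 0 = f"
    and cont: "\<And>j. continuous_on {-1..1} (Df j)"
    and der: "\<And>j x. x \<in> {-1..1} \<Longrightarrow> (Df j has_real_derivative Df (Suc j) x) (at x within {-1..1})"
    and Z: "finite Z" "Z \<subseteq> {-1..1}" "card Z = n" "n \<ge> 1"
    and x: "x \<in> {-1..1}"
  shows "\<exists>\<xi>\<in>{-1..1}. f x - poly (interp Z f) x = Df n \<xi> / fact n * poly (omega Z) x"
proof (cases "x \<in> Z")
  case True
  have "poly (omega Z) x = 0" unfolding omega_props(3)[OF Z(1)]
    using Z(1) True by (intro prod_zero) auto
  moreover have "poly (interp Z f) x = f x" using interp_at[OF Z(1) True] .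
  ultimately show ?thesis using x by auto
next
  case False
  define p where "p = interp Z f"
  define om where "om = omega Z"
  define w where "w = poly om x"
  have w0: "w \<noteq> 0" unfolding w_def om_def omega_props(3)[OF Z(1)] using Z(1) False by auto
  define K where "K = (f x - poly p x) / w"
  define g where "g j t = Df j t - poly ((pderiv ^^ j) p) t - K * poly ((pderiv ^^ j) om) t" for j t
  have gcont: "continuous_on {-1..1} (g j)" for j
    unfolding g_def[abs_def] by (intro continuous_intros cont)
  have gder: "(g j has_real_derivative g (Suc j) t) (at t)" if t: "-1 < t" "t < 1" for j t
  proof -
    have "at t within {-1..1} = at t" using t by (intro at_within_interior) auto
    then have dD: "(Df j has_real_derivative Df (Suc j) t) (at t)" using der[of t j] t by simp
    show ?thesis unfolding g_def[abs_def]
      by (auto intro!: derivative_eq_intros dD simp del: funpow.simps simp: funpow_Suc_right[symmetric]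
               simp add: funpow.simps(2))
  qed
  have T: "finite (insert x Z)" "insert x Z \<subseteq> {-1..1}" "card (insert x Z) = Suc n"
      "\<forall>t\<in>insert x Z. g 0 t = 0"
  proof -
    show "finite (insert x Z)" "insert x Z \<subseteq> {-1..1}" "card (insert x Z) = Suc n"
      using Z x False by auto
    have "g 0 x = Df 0 x - poly p x - ((f x - poly p x)/w) * w" unfolding g_def K_def w_def by simp
    then have "g 0 x = 0" using w0 Df0 by simp
    moreover have "g 0 z = 0" if "z \<in> Z" for z
    proof -
      have "poly om z = 0" unfolding om_def omega_props(3)[OF Z(1)]
        using Z(1) that by (intro prod_zero) auto
      then show ?thesis unfolding g_def p_def using interp_at[OF Z(1) that] Df0 by simp
    qed
    ultimately show "\<forall>t\<in>insert x Z. g 0 t = 0" by auto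
  qed
  obtain \<xi> where \<xi>: "\<xi> \<in> {-1..1}" "g n \<xi> = 0"
    using rolle_iter[of n "-1" 1 g, OF gcont gder T] by auto
  have p0: "(pderiv ^^ n) p = 0" unfolding p_def
    using degree_interp[OF Z(1), of f] Z(3,4) by (intro pderiv_iter_zero) linarith
  have o0: "(pderiv ^^ n) om = [:fact n:]" unfolding om_def
    using pderiv_iter_top[of "omega Z" n] omega_props[OF Z(1)] Z(3) by simp
  have "Df n \<xi> = K * fact n" using \<xi>(2) unfolding g_def p0 o0 by simp
  then have "K = Df n \<xi> / fact n" by simp
  then have "(f x - poly p x) / w = Df n \<xi> / fact n" unfolding K_def .
  then have "f x - poly p x = Df n \<xi> / fact n * w" using w0 by (simp add: divide_eq_eq)
  then show ?thesis using \<xi>(1) unfolding p_def w_def om_def by blast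
qed

lemma quad_interp:
  assumes "finite Z"
  shows "quad Z xk f = integral {-1..xk} (\<lambda>x. poly (interp Z f) x)"
proof -
  have "integral {-1..xk} (\<lambda>x. poly (interp Z f) x)
      = integral {-1..xk} (\<lambda>x. \<Sum>z\<in>Z. f z * poly (lagrange_basis Z z) x)"
    unfolding interp_def poly_sum poly_smult ..
  also have "\<dots> = (\<Sum>z\<in>Z. integral {-1..xk} (\<lambda>x. f z * poly (lagrange_basis Z z) x))"
    using assms by (intro integral_sum) (auto intro!: integrable_continuous_interval continuous_intros)
  also have "\<dots> = quad Z xk f" unfolding quad_def quad_weight_def
    by (simp add: mult.commute)
  finally show ?thesis by simp
qed

lemma omega_bound:
  assumes "finite Z" "Z \<subseteq> {-1..1}" "x \<in> {-1..1}"
  shows "\<bar>poly (omega Z) x\<bar> \<le> 2 ^ card Z"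
proof -
  have "\<bar>poly (omega Z) x\<bar> = (\<Prod>z\<in>Z. \<bar>x - z\<bar>)" unfolding omega_props(3)[OF assms(1)] abs_prod ..
  also have "\<dots> \<le> (\<Prod>z\<in>Z. 2)" using assms by (intro prod_mono) (auto simp: subset_eq)
  finally show ?thesis by simp
qed

lemma quad_err:
  fixes f :: "real \<Rightarrow> real" and Df :: "nat \<Rightarrow> real \<Rightarrow> real"
  assumes Df0: "Df 0 = f"
    and cont: "\<And>j. continuous_on {-1..1} (Df j)"
    and der: "\<And>j x. x \<in> {-1..1} \<Longrightarrow> (Df j has_real_derivative Df (Suc j) x) (at x within {-1..1})"
    and bd: "\<And>m x. x \<in> {-1..1} \<Longrightarrow> \<bar>Df (Suc m) x\<bar> \<le> A"
    and Z: "finite Z" "Z \<subseteq> {-1..1}" "card Z = Suc m"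
    and xk: "xk \<in> {-1..1}"
  shows "\<bar>integral {-1..xk} f - quad Z xk f\<bar> \<le> 2 * (A * 2 ^ Suc m / fact (Suc m))"
proof -
  define p where "p = interp Z f"
  define B where "B = A * 2 ^ Suc m / fact (Suc m)"
  have A0: "A \<ge> 0" using bd[of 0 0] by auto
  have B0: "B \<ge> 0" unfolding B_def using A0 by simp
  have fc: "continuous_on {-1..xk} f" using cont[of 0] Df0 xk
    by (auto intro: continuous_on_subset)
  have pt: "\<bar>f x - poly p x\<bar> \<le> B" if x: "x \<in> {-1..xk}" for x
  proof -
    have x1: "x \<in> {-1..1}" using x xk by auto
    obtain \<xi> where \<xi>: "\<xi> \<in> {-1..1}" "f x - poly p x = Df (Suc m) \<xi> / fact (Suc m) * poly (omega Z) x"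
      using interp_error[OF Df0 cont der Z _ x1] unfolding p_def by auto
    have "\<bar>f x - poly p x\<bar> = \<bar>Df (Suc m) \<xi>\<bar> / fact (Suc m) * \<bar>poly (omega Z) x\<bar>"
      using \<xi>(2) by (simp add: abs_mult)
    also have "\<dots> \<le> A / fact (Suc m) * 2 ^ Suc m"
      using bd[OF \<xi>(1)] omega_bound[OF Z(1,2) x1] Z(3) A0
      by (intro mult_mono divide_right_mono) auto
    finally show ?thesis unfolding B_def by simp
  qed
  have "integral {-1..xk} f - quad Z xk f = integral {-1..xk} (\<lambda>x. f x - poly p x)"
    unfolding quad_interp[OF Z(1)] p_def
    by (intro integral_diff[symmetric] integrable_continuous_interval fc continuous_intros)
  also have "\<bar>\<dots>\<bar> \<le> B * (xk - -1)"
  proof -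
    have fpc: "continuous_on {-1..xk} (\<lambda>x. f x - poly p x)" by (intro continuous_intros fc)
    show ?thesis using integral_bound[of "-1" xk "\<lambda>x. f x - poly p x" B] xk fpc pt by auto
  qed
  also have "\<dots> \<le> B * 2" using xk B0 by (intro mult_left_mono) auto
  finally show ?thesis unfolding B_def by simp
qed


theorem theorem8:
  fixes f :: "real \<Rightarrow> real" and Df :: "nat \<Rightarrow> real \<Rightarrow> real"
    and A xk :: real and astar :: "nat \<Rightarrow> real"
  assumes "A > 0"
    and "Df 0 = f"
    and "\<And>n. continuous_on {-1..1} (Df n)"
    and "\<And>n x. x \<in> {-1..1} \<Longrightarrow> (Df n has_real_derivative Df (Suc n) x) (at x within {-1..1})"
    and "\<And>m x. x \<in> {-1..1} \<Longrightarrow> \<bar>Df (Suc m) x\<bar> \<le> A"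
    and "xk \<in> {-1..1}"
    and "\<And>m. astar m > -1/2"
    and "\<And>m \<alpha>. \<alpha> > -1/2 \<Longrightarrow> (eta xk m (astar m))\<^sup>2 \<le> (eta xk m \<alpha>)\<^sup>2"
  shows "(\<lambda>m. quad (gg_nodes (astar m) m) xk f - quad (gg_nodes 0 m) xk f) \<longlonglongrightarrow> 0"
proof -
  define g where "g m = 4 * (A * 2 ^ Suc m / fact (Suc m))" for m :: nat
  have bound: "norm (quad (gg_nodes (astar m) m) xk f - quad (gg_nodes 0 m) xk f) \<le> g m" for m
  proof -
    have Z1: "finite (gg_nodes (astar m) m)" "gg_nodes (astar m) m \<subseteq> {-1..1}"
        "card (gg_nodes (astar m) m) = Suc m"
      using gg_nodes_props[OF assms(7)[of m], of m] by auto
    have Z2: "finite (gg_nodes 0 m)" "gg_nodes 0 m \<subseteq> {-1..1}" "card (gg_nodes 0 m) = Suc m"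
      using gg_nodes_props[of 0 m] by auto
    have e1: "\<bar>integral {-1..xk} f - quad (gg_nodes (astar m) m) xk f\<bar> \<le> 2 * (A * 2 ^ Suc m / fact (Suc m))"
      by (rule quad_err[OF assms(2,3,4,5) Z1 assms(6)])
    have e2: "\<bar>integral {-1..xk} f - quad (gg_nodes 0 m) xk f\<bar> \<le> 2 * (A * 2 ^ Suc m / fact (Suc m))"
      by (rule quad_err[OF assms(2,3,4,5) Z2 assms(6)])
    show ?thesis using e1 e2 unfolding g_def by simp
  qed
  have l0: "(\<lambda>n. inverse (fact n) * (2::real) ^ n) \<longlonglongrightarrow> 0"
    by (rule summable_LIMSEQ_zero[OF summable_exp])
  have l1: "(\<lambda>m. inverse (fact (Suc m)) * (2::real) ^ Suc m) \<longlonglongrightarrow> 0"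
    using LIMSEQ_Suc[OF l0] .
  have h: "(\<lambda>m. (4 * A) * (inverse (fact (Suc m)) * (2::real) ^ Suc m)) \<longlonglongrightarrow> 0"
    by (rule tendsto_mult_right_zero[OF l1])
  have eq: "(\<lambda>m. (4 * A) * (inverse (fact (Suc m)) * (2::real) ^ Suc m)) = g"
    unfolding g_def by (rule ext) (simp only: divide_inverse mult_ac)
  have gl: "g \<longlonglongrightarrow> 0" by (subst eq[symmetric]) (rule h)
  show ?thesis
    by (rule Lim_null_comparison[OF _ gl]) (use bound in auto)
qed

end
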